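(* Let $R:K\to H$ be a Yetter--Drinfeld relative Rota--Baxter operator on the Hopf algebra $(H,\cdot,1,\Delta,\epsilon,S_H)$ with respect to $(K,\rightharpoonup)$. Define $S_K:K\to K$ by $S_K(a):=R(a_1)\rightharpoonup R^{-1}\big(S_H(R(a_2))\big)$. Then $S_K(a_1)\cdot_K a_2=\epsilon(a)1_K=a_1\cdot_K S_K(a_2)$ for all $a\in K$; consequently $K$ is a Hopf monoid in ${}^H_H\mathcal{YD}$ with antipode $S_K$.
   Context: Conventions: $\Bbbk$ is a field; algebras are associative unital, coalgebras coassociative counital; Sweedler notation $\Delta(c)=c_1\otimes c_2$ (summation omitted), iterated as $c_1\otimes c_2\otimes c_3$ etc. Yetter--Drinfeld modules: for a Hopf algebra $A$ with antipode $T$, a left-left Yetter--Drinfeld module is a left $A$-module $(V,\triangleright)$ and left $A$-comodule $\rho(v)=v_{-1}\otimes v_0$ with $\rho(a\triangleright v)=a_1v_{-1}T(a_3)\otimes a_2\triangleright v_0$; these form the braided monoidal category ${}^A_A\mathcal{YD}$ with braiding $\sigma(v\otimes w)=v_{-1}\triangleright w\otimes v_0$. A bimonoid in ${}^A_A\mathcal{YD}$ is an object with algebra and coalgebra structure maps in ${}^A_A\mathcal{YD}$, $\epsilon$ multiplicative, $\epsilon(1)=1$, $\Delta(1)=1\otimes1$, and $\Delta\circ m=(m\otimes m)(\mathrm{Id}\otimes\sigma\otimes\mathrm{Id})(\Delta\otimes\Delta)$; a Hopf monoid is a bimonoid with antipode (convolution inverse of the identity). Definition (Yetter--Drinfeld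 relative (pre-)Rota--Baxter operator). Let $(H,\cdot,1,\Delta,\epsilon,S_H)$ be a Hopf algebra and $(K,\cdot_K,1_K,\Delta,\epsilon)$ a bimonoid in ${}^H_H\mathcal{YD}$ with $H$-action $\rightharpoonup$. A coalgebra morphism $R:K\to H$ is a Yetter--Drinfeld relative pre-Rota--Baxter operator if for all $a,b\in K$: (RB1) $R(a)\cdot R(b)=R\big(a_1\cdot_K(R(a_2)\rightharpoonup b)\big)$; (RB2) $S_HR(R(a_1)\rightharpoonup b_1)\cdot R(a_2)\cdot R(b_2)\otimes R(R(a_3)\rightharpoonup b_3)=S_HR(R(a_2)\rightharpoonup b_2)\cdot R(a_3)\cdot R(b_3)\otimes R(R(a_1)\rightharpoonup b_1)$. It is a Yetter--Drinfeld relative Rota--Baxter operator if moreover $R$ is bijective and (RB3) $\big(a_1\rightharpoonup R^{-1}S_H(a_2)\big)\cdot_K R^{-1}(a_3)=\epsilon(a)1_K$ for all $a\in H$. *)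

theory Defs
  imports Complex_Main
begin

text \<open>
A vector space over a field of type 'a is a type 'v::ab_group_add with a
scalar multiplication s :: 'a => 'v => 'v satisfying vector_space s (HOL Vector_Spaces).

An element of V (x) W is represented by a finite list of pairs (a finite sum of
simple tensors).  Two such lists represent the same tensor iff they pair equally against all
f (x) g with f, g linear functionals (over a field the canonical map
V (x) W -> Bil(V* x W*, k) is injective).
Comultiplications / coactions are list valued maps, i.e. Sweedler notation literally.
\<close>

definition tensor2_eq ::
  "('a::field \<Rightarrow> 'v::ab_group_add \<Rightarrow> 'v) \<Rightarrow> ('a \<Rightarrow> 'w::ab_group_add \<Rightarrow> 'w)
   \<Rightarrow> ('v \<times> 'w) list \<Rightarrow> ('v \<times> 'w) list \<Rightarrow> bool" where
  "tensor2_eq sV sW xs ys \<longleftrightarrow>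
     (\<forall>f g. Vector_Spaces.linear sV times f \<longrightarrow> Vector_Spaces.linear sW times g \<longrightarrow>
        sum_list (map (\<lambda>(x, y). f x * g y) xs) = sum_list (map (\<lambda>(x, y). f x * g y) ys))"

definition tensor3_eq ::
  "('a::field \<Rightarrow> 'u::ab_group_add \<Rightarrow> 'u) \<Rightarrow> ('a \<Rightarrow> 'v::ab_group_add \<Rightarrow> 'v)
   \<Rightarrow> ('a \<Rightarrow> 'w::ab_group_add \<Rightarrow> 'w)
   \<Rightarrow> ('u \<times> 'v \<times> 'w) list \<Rightarrow> ('u \<times> 'v \<times> 'w) list \<Rightarrow> bool" where
  "tensor3_eq sU sV sW xs ys \<longleftrightarrow>
     (\<forall>f g h. Vector_Spaces.linear sU times f \<longrightarrow> Vector_Spaces.linear sV times g \<longrightarrow> Vector_Spaces.linear sW times h \<longrightarrow>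
        sum_list (map (\<lambda>(x, y, z). f x * g y * h z) xs)
        = sum_list (map (\<lambda>(x, y, z). f x * g y * h z) ys))"

definition tensor2_linear ::
  "('a::field \<Rightarrow> 'x::ab_group_add \<Rightarrow> 'x) \<Rightarrow> ('a \<Rightarrow> 'v::ab_group_add \<Rightarrow> 'v)
   \<Rightarrow> ('a \<Rightarrow> 'w::ab_group_add \<Rightarrow> 'w) \<Rightarrow> ('x \<Rightarrow> ('v \<times> 'w) list) \<Rightarrow> bool" where
  "tensor2_linear sX sV sW D \<longleftrightarrow>
     (\<forall>f g. Vector_Spaces.linear sV times f \<longrightarrow> Vector_Spaces.linear sW times g \<longrightarrow>
        Vector_Spaces.linear sX times (\<lambda>x. sum_list (map (\<lambda>(u, v). f u * g v) (D x))))"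

text \<open>Iterated Sweedler notation c1 (x) c2 (x) c3 = (id (x) Delta) Delta c.\<close>
definition sweedler3 :: "('c \<Rightarrow> ('c \<times> 'c) list) \<Rightarrow> 'c \<Rightarrow> ('c \<times> 'c \<times> 'c) list" where
  "sweedler3 \<Delta> c = concat (map (\<lambda>(x, y). map (\<lambda>(y1, y2). (x, y1, y2)) (\<Delta> y)) (\<Delta> c))"

definition sweedler3' :: "('c \<Rightarrow> ('c \<times> 'c) list) \<Rightarrow> 'c \<Rightarrow> ('c \<times> 'c \<times> 'c) list" where
  "sweedler3' \<Delta> c = concat (map (\<lambda>(x, y). map (\<lambda>(x1, x2). (x1, x2, y)) (\<Delta> x)) (\<Delta> c))"

definition is_algebra ::
  "('a::field \<Rightarrow> 'v::ab_group_add \<Rightarrow> 'v) \<Rightarrow> ('v \<Rightarrow> 'v \<Rightarrow> 'v) \<Rightarrow> 'v \<Rightarrow> bool" where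
  "is_algebra s m u \<longleftrightarrow> vector_space s
     \<and> (\<forall>x. Vector_Spaces.linear s s (m x)) \<and> (\<forall>y. Vector_Spaces.linear s s (\<lambda>x. m x y))
     \<and> (\<forall>x y z. m (m x y) z = m x (m y z))
     \<and> (\<forall>x. m u x = x \<and> m x u = x)"

definition is_coalgebra ::
  "('a::field \<Rightarrow> 'v::ab_group_add \<Rightarrow> 'v) \<Rightarrow> ('v \<Rightarrow> ('v \<times> 'v) list) \<Rightarrow> ('v \<Rightarrow> 'a) \<Rightarrow> bool" where
  "is_coalgebra s \<Delta> \<epsilon> \<longleftrightarrow> vector_space s
     \<and> tensor2_linear s s s \<Delta> \<and> Vector_Spaces.linear s times \<epsilon>
     \<and> (\<forall>c. tensor3_eq s s s (sweedler3' \<Delta> c) (sweedler3 \<Delta> c))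
     \<and> (\<forall>c. sum_list (map (\<lambda>(x, y). s (\<epsilon> x) y) (\<Delta> c)) = c)
     \<and> (\<forall>c. sum_list (map (\<lambda>(x, y). s (\<epsilon> y) x) (\<Delta> c)) = c)"

definition is_hopf_algebra ::
  "('a::field \<Rightarrow> 'h::ab_group_add \<Rightarrow> 'h) \<Rightarrow> ('h \<Rightarrow> 'h \<Rightarrow> 'h) \<Rightarrow> 'h
   \<Rightarrow> ('h \<Rightarrow> ('h \<times> 'h) list) \<Rightarrow> ('h \<Rightarrow> 'a) \<Rightarrow> ('h \<Rightarrow> 'h) \<Rightarrow> bool" where
  "is_hopf_algebra s m u \<Delta> \<epsilon> S \<longleftrightarrow>
     is_algebra s m u \<and> is_coalgebra s \<Delta> \<epsilon>
     \<and> (\<forall>x y. tensor2_eq s s (\<Delta> (m x y))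
           (concat (map (\<lambda>(x1, x2). map (\<lambda>(y1, y2). (m x1 y1, m x2 y2)) (\<Delta> y)) (\<Delta> x))))
     \<and> tensor2_eq s s (\<Delta> u) [(u, u)]
     \<and> (\<forall>x y. \<epsilon> (m x y) = \<epsilon> x * \<epsilon> y) \<and> \<epsilon> u = 1
     \<and> Vector_Spaces.linear s s S
     \<and> (\<forall>a. sum_list (map (\<lambda>(x, y). m (S x) y) (\<Delta> a)) = s (\<epsilon> a) u)
     \<and> (\<forall>a. sum_list (map (\<lambda>(x, y). m x (S y)) (\<Delta> a)) = s (\<epsilon> a) u)"

definition is_YD_module ::
  "('a::field \<Rightarrow> 'h::ab_group_add \<Rightarrow> 'h) \<Rightarrow> ('h \<Rightarrow> 'h \<Rightarrow> 'h) \<Rightarrow> 'h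
   \<Rightarrow> ('h \<Rightarrow> ('h \<times> 'h) list) \<Rightarrow> ('h \<Rightarrow> 'a) \<Rightarrow> ('h \<Rightarrow> 'h)
   \<Rightarrow> ('a \<Rightarrow> 'k::ab_group_add \<Rightarrow> 'k) \<Rightarrow> ('h \<Rightarrow> 'k \<Rightarrow> 'k) \<Rightarrow> ('k \<Rightarrow> ('h \<times> 'k) list) \<Rightarrow> bool" where
  "is_YD_module sH mH uH \<Delta>H \<epsilon>H SH sK act \<rho> \<longleftrightarrow>
     vector_space sK
     \<and> (\<forall>h. Vector_Spaces.linear sK sK (act h)) \<and> (\<forall>v. Vector_Spaces.linear sH sK (\<lambda>h. act h v))
     \<and> (\<forall>v. act uH v = v) \<and> (\<forall>a b v. act (mH a b) v = act a (act b v))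
     \<and> tensor2_linear sK sH sK \<rho>
     \<and> (\<forall>w. tensor3_eq sH sH sK
           (concat (map (\<lambda>(h, v). map (\<lambda>(h1, h2). (h1, h2, v)) (\<Delta>H h)) (\<rho> w)))
           (concat (map (\<lambda>(h, v). map (\<lambda>(g, v'). (h, g, v')) (\<rho> v)) (\<rho> w))))
     \<and> (\<forall>w. sum_list (map (\<lambda>(h, v). sK (\<epsilon>H h) v) (\<rho> w)) = w)
     \<and> (\<forall>a v. tensor2_eq sH sK (\<rho> (act a v))
           (concat (map (\<lambda>(a1, a2, a3). map (\<lambda>(h, v0). (mH (mH a1 h) (SH a3), act a2 v0)) (\<rho> v))
              (sweedler3 \<Delta>H a))))"

text \<open>(K, mK, 1K, DeltaK, epsK) is a bimonoid in the braided category of left-left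
Yetter-Drinfeld modules over H (all structure maps are YD morphisms; the tensor product of
YD modules carries the diagonal action and codiagonal coaction; the braiding is
sigma(v (x) w) = v_{-1} act w (x) v_0).\<close>
definition is_YD_bimonoid ::
  "('a::field \<Rightarrow> 'h::ab_group_add \<Rightarrow> 'h) \<Rightarrow> ('h \<Rightarrow> 'h \<Rightarrow> 'h) \<Rightarrow> 'h
   \<Rightarrow> ('h \<Rightarrow> ('h \<times> 'h) list) \<Rightarrow> ('h \<Rightarrow> 'a) \<Rightarrow> ('h \<Rightarrow> 'h)
   \<Rightarrow> ('a \<Rightarrow> 'k::ab_group_add \<Rightarrow> 'k) \<Rightarrow> ('h \<Rightarrow> 'k \<Rightarrow> 'k) \<Rightarrow> ('k \<Rightarrow> ('h \<times> 'k) list)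
   \<Rightarrow> ('k \<Rightarrow> 'k \<Rightarrow> 'k) \<Rightarrow> 'k \<Rightarrow> ('k \<Rightarrow> ('k \<times> 'k) list) \<Rightarrow> ('k \<Rightarrow> 'a) \<Rightarrow> bool" where
  "is_YD_bimonoid sH mH uH \<Delta>H \<epsilon>H SH sK act \<rho> mK uK \<Delta>K \<epsilon>K \<longleftrightarrow>
     is_YD_module sH mH uH \<Delta>H \<epsilon>H SH sK act \<rho>
     \<and> is_algebra sK mK uK \<and> is_coalgebra sK \<Delta>K \<epsilon>K
     \<comment> \<open>multiplication is a YD morphism\<close>
     \<and> (\<forall>h a b. act h (mK a b) = sum_list (map (\<lambda>(h1, h2). mK (act h1 a) (act h2 b)) (\<Delta>H h)))
     \<and> (\<forall>a b. tensor2_eq sH sK (\<rho> (mK a b))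
           (concat (map (\<lambda>(g, a0). map (\<lambda>(h, b0). (mH g h, mK a0 b0)) (\<rho> b)) (\<rho> a))))
     \<comment> \<open>unit is a YD morphism\<close>
     \<and> (\<forall>h. act h uK = sK (\<epsilon>H h) uK) \<and> tensor2_eq sH sK (\<rho> uK) [(uH, uK)]
     \<comment> \<open>comultiplication is a YD morphism\<close>
     \<and> (\<forall>h a. tensor2_eq sK sK (\<Delta>K (act h a))
           (concat (map (\<lambda>(h1, h2). map (\<lambda>(a1, a2). (act h1 a1, act h2 a2)) (\<Delta>K a)) (\<Delta>H h))))
     \<and> (\<forall>a. tensor3_eq sH sK sK
           (concat (map (\<lambda>(g, v). map (\<lambda>(v1, v2). (g, v1, v2)) (\<Delta>K v)) (\<rho> a)))
           (concat (map (\<lambda>(x, y). concat (map (\<lambda>(g, x0). map (\<lambda>(h, y0). (mH g h, x0, y0)) (\<rho> y)) (\<rho> x)))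
              (\<Delta>K a))))
     \<comment> \<open>counit is a YD morphism\<close>
     \<and> (\<forall>h a. \<epsilon>K (act h a) = \<epsilon>H h * \<epsilon>K a)
     \<and> (\<forall>a. sum_list (map (\<lambda>(g, v). sH (\<epsilon>K v) g) (\<rho> a)) = sH (\<epsilon>K a) uH)
     \<comment> \<open>bimonoid axioms\<close>
     \<and> (\<forall>a b. \<epsilon>K (mK a b) = \<epsilon>K a * \<epsilon>K b) \<and> \<epsilon>K uK = 1
     \<and> tensor2_eq sK sK (\<Delta>K uK) [(uK, uK)]
     \<and> (\<forall>a b. tensor2_eq sK sK (\<Delta>K (mK a b))
           (concat (map (\<lambda>(a1, a2). concat (map (\<lambda>(g, a20). map (\<lambda>(b1, b2).
               (mK a1 (act g b1), mK a20 b2)) (\<Delta>K b)) (\<rho> a2))) (\<Delta>K a))))"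

definition is_YD_hopf_monoid ::
  "('a::field \<Rightarrow> 'h::ab_group_add \<Rightarrow> 'h) \<Rightarrow> ('h \<Rightarrow> 'h \<Rightarrow> 'h) \<Rightarrow> 'h
   \<Rightarrow> ('h \<Rightarrow> ('h \<times> 'h) list) \<Rightarrow> ('h \<Rightarrow> 'a) \<Rightarrow> ('h \<Rightarrow> 'h)
   \<Rightarrow> ('a \<Rightarrow> 'k::ab_group_add \<Rightarrow> 'k) \<Rightarrow> ('h \<Rightarrow> 'k \<Rightarrow> 'k) \<Rightarrow> ('k \<Rightarrow> ('h \<times> 'k) list)
   \<Rightarrow> ('k \<Rightarrow> 'k \<Rightarrow> 'k) \<Rightarrow> 'k \<Rightarrow> ('k \<Rightarrow> ('k \<times> 'k) list) \<Rightarrow> ('k \<Rightarrow> 'a) \<Rightarrow> ('k \<Rightarrow> 'k) \<Rightarrow> bool" where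
  "is_YD_hopf_monoid sH mH uH \<Delta>H \<epsilon>H SH sK act \<rho> mK uK \<Delta>K \<epsilon>K SK \<longleftrightarrow>
     is_YD_bimonoid sH mH uH \<Delta>H \<epsilon>H SH sK act \<rho> mK uK \<Delta>K \<epsilon>K
     \<and> Vector_Spaces.linear sK sK SK
     \<and> (\<forall>a. sum_list (map (\<lambda>(x, y). mK (SK x) y) (\<Delta>K a)) = sK (\<epsilon>K a) uK)
     \<and> (\<forall>a. sum_list (map (\<lambda>(x, y). mK x (SK y)) (\<Delta>K a)) = sK (\<epsilon>K a) uK)"

definition is_YD_rel_RB ::
  "('a::field \<Rightarrow> 'h::ab_group_add \<Rightarrow> 'h) \<Rightarrow> ('h \<Rightarrow> 'h \<Rightarrow> 'h) \<Rightarrow> 'h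
   \<Rightarrow> ('h \<Rightarrow> ('h \<times> 'h) list) \<Rightarrow> ('h \<Rightarrow> 'a) \<Rightarrow> ('h \<Rightarrow> 'h)
   \<Rightarrow> ('a \<Rightarrow> 'k::ab_group_add \<Rightarrow> 'k) \<Rightarrow> ('h \<Rightarrow> 'k \<Rightarrow> 'k) \<Rightarrow> ('k \<Rightarrow> ('h \<times> 'k) list)
   \<Rightarrow> ('k \<Rightarrow> 'k \<Rightarrow> 'k) \<Rightarrow> 'k \<Rightarrow> ('k \<Rightarrow> ('k \<times> 'k) list) \<Rightarrow> ('k \<Rightarrow> 'a) \<Rightarrow> ('k \<Rightarrow> 'h) \<Rightarrow> bool" where
  "is_YD_rel_RB sH mH uH \<Delta>H \<epsilon>H SH sK act \<rho> mK uK \<Delta>K \<epsilon>K R \<longleftrightarrow>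
     is_hopf_algebra sH mH uH \<Delta>H \<epsilon>H SH
     \<and> is_YD_bimonoid sH mH uH \<Delta>H \<epsilon>H SH sK act \<rho> mK uK \<Delta>K \<epsilon>K
     \<comment> \<open>R is a coalgebra morphism\<close>
     \<and> Vector_Spaces.linear sK sH R
     \<and> (\<forall>a. tensor2_eq sH sH (\<Delta>H (R a)) (map (\<lambda>(x, y). (R x, R y)) (\<Delta>K a)))
     \<and> (\<forall>a. \<epsilon>H (R a) = \<epsilon>K a)
     \<comment> \<open>(RB1)\<close>
     \<and> (\<forall>a b. mH (R a) (R b) = R (sum_list (map (\<lambda>(a1, a2). mK a1 (act (R a2) b)) (\<Delta>K a))))
     \<comment> \<open>(RB2)\<close>
     \<and> (\<forall>a b. tensor2_eq sH sH
          (concat (map (\<lambda>(a1, a2, a3). map (\<lambda>(b1, b2, b3).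
              (mH (mH (SH (R (act (R a1) b1))) (R a2)) (R b2), R (act (R a3) b3)))
              (sweedler3 \<Delta>K b)) (sweedler3 \<Delta>K a)))
          (concat (map (\<lambda>(a1, a2, a3). map (\<lambda>(b1, b2, b3).
              (mH (mH (SH (R (act (R a2) b2))) (R a3)) (R b3), R (act (R a1) b1)))
              (sweedler3 \<Delta>K b)) (sweedler3 \<Delta>K a))))
     \<comment> \<open>bijectivity and (RB3)\<close>
     \<and> bij R
     \<and> (\<forall>a. sum_list (map (\<lambda>(a1, a2, a3). mK (act a1 (inv R (SH a2))) (inv R a3))
              (sweedler3 \<Delta>H a)) = sK (\<epsilon>H a) uK)"

definition SK_of ::
  "('h \<Rightarrow> 'h) \<Rightarrow> ('h \<Rightarrow> 'k::ab_group_add \<Rightarrow> 'k) \<Rightarrow> ('k \<Rightarrow> ('k \<times> 'k) list) \<Rightarrow> ('k \<Rightarrow> 'h) \<Rightarrow> 'k \<Rightarrow> 'k" where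
  "SK_of SH act \<Delta>K R a = sum_list (map (\<lambda>(x, y). act (R x) (inv R (SH (R y)))) (\<Delta>K a))"

end

theory Submission
  imports Defs
begin

lemma vs_times: "vector_space ((*) :: 'a::field \<Rightarrow> 'a \<Rightarrow> 'a)"
  by unfold_locales (auto simp: algebra_simps)

definition lin :: "('a::field \<Rightarrow> 'b::ab_group_add \<Rightarrow> 'b) \<Rightarrow> ('a \<Rightarrow> 'c::ab_group_add \<Rightarrow> 'c) \<Rightarrow> ('b \<Rightarrow> 'c) \<Rightarrow> bool" where
 "lin s1 s2 f \<longleftrightarrow> (\<forall>x y. f (x+y) = f x + f y) \<and> (\<forall>c x. f (s1 c x) = s2 c (f x))"

lemma linear_lin: "Vector_Spaces.linear s1 s2 f \<longleftrightarrow> vector_space s1 \<and> vector_space s2 \<and> lin s1 s2 f"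
  unfolding linear_iff_module_hom module_hom_iff module_iff_vector_space lin_def by auto

lemma lin_add: "lin s1 s2 f \<Longrightarrow> f (x+y) = f x + f y" by (simp add: lin_def)
lemma lin_scale: "lin s1 s2 f \<Longrightarrow> f (s1 c x) = s2 c (f x)" by (simp add: lin_def)
lemma lin_zero: "lin s1 s2 f \<Longrightarrow> f 0 = 0"
  using lin_add[of s1 s2 f 0 0] by simp
lemma lin_minus: "lin s1 s2 f \<Longrightarrow> f (- x) = - f x"
  using lin_add[of s1 s2 f x "-x"] lin_zero[of s1 s2 f] by (simp add: eq_neg_iff_add_eq_0 add.commute)
lemma lin_sum_list: "lin s1 s2 f \<Longrightarrow> f (sum_list (map g xs)) = sum_list (map (\<lambda>x. f (g x)) xs)"
  by (induction xs) (auto simp: lin_zero lin_add)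
lemma lin_sum: "lin s1 s2 f \<Longrightarrow> f (sum g A) = (\<Sum>x\<in>A. f (g x))"
  by (induction A rule: infinite_finite_induct) (auto simp: lin_zero lin_add)

lemma vsf:
  assumes "vector_space s"
  shows vs_zr: "s c 0 = 0" and vs_rd: "s c (x+y) = s c x + s c y" and vs_sum: "s c (sum g A) = (\<Sum>a\<in>A. s c (g a))"
   and vs_zl: "s 0 x = 0" and vs_one: "s 1 x = x" and vs_ss: "s a (s b x) = s (a*b) x"
   and vs_mr: "s c (-x) = - s c x" and vs_ld: "s (a+b) x = s a x + s b x"
proof -
  interpret vector_space s by fact
  show "s c 0 = 0" "s c (x+y) = s c x + s c y" "s c (sum g A) = (\<Sum>a\<in>A. s c (g a))"
   "s 0 x = 0" "s 1 x = x" "s a (s b x) = s (a*b) x" "s c (-x) = - s c x" "s (a+b) x = s a x + s b x"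
    by (auto simp: scale_sum_right scale_right_distrib scale_left_distrib)
qed

lemma scale_sum_list: "vector_space s \<Longrightarrow> s c (sum_list (map g xs)) = sum_list (map (\<lambda>x. s c (g x)) xs)"
  by (induction xs) (auto simp: vs_zr vs_rd)

lemma lin_sum_list_fun:
  assumes "vector_space s2" "\<And>t. t \<in> set ts \<Longrightarrow> lin s1 s2 (F t)"
  shows "lin s1 s2 (\<lambda>x. sum_list (map (\<lambda>t. F t x) ts))"
  using assms(2)
proof (induction ts)
  case Nil then show ?case using assms(1) by (simp add: lin_def vs_zr)
next
  case (Cons t ts)
  then have "lin s1 s2 (F t)" by auto
  with Cons show ?case using assms(1)
    by (simp add: lin_def vs_rd algebra_simps)
qed

lemma lin_sum_fun:
  assumes "vector_space s2" "\<And>t. t \<in> A \<Longrightarrow> lin s1 s2 (F t)"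
  shows "lin s1 s2 (\<lambda>x. \<Sum>t\<in>A. F t x)"
  using assms unfolding lin_def
  by (auto simp: sum.distrib vs_sum)

lemma lin_comp: "lin s1 s2 f \<Longrightarrow> lin s2 s3 g \<Longrightarrow> lin s1 s3 (\<lambda>x. g (f x))"
  by (simp add: lin_def)

lemma lin_id: "lin s s (\<lambda>x. x)" by (simp add: lin_def)

lemma sum_list_sum_swap: "sum_list (map (\<lambda>x. \<Sum>b\<in>F. g b x) xs) = (\<Sum>b\<in>F. sum_list (map (g b) xs))"
  by (induction xs) (auto simp: sum.distrib)

lemma sum_list_concat_map: "sum_list (map f (concat (map g xs))) = sum_list (map (\<lambda>x. sum_list (map f (g x))) xs)"
  by (induction xs) auto

lemma basis_expand:
  assumes vs: "vector_space s"
  obtains r where "\<And>b. lin s (*) (\<lambda>v. r v b)" and "\<And>v. finite {b. r v b \<noteq> 0}"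
    and "\<And>v F. finite F \<Longrightarrow> {b. r v b \<noteq> 0} \<subseteq> F \<Longrightarrow> v = (\<Sum>b\<in>F. s (r v b) b)"
proof -
  interpret vector_space s by fact
  define B where "B = extend_basis {}"
  have iB: "independent B" and sB: "span B = UNIV"
    unfolding B_def using independent_extend_basis[of "{}"] span_extend_basis[of "{}"] independent_empty by auto
  define r where "r v b = representation B v b" for v b
  have 1: "lin s (*) (\<lambda>v. r v b)" for b
    using linear_representation[OF iB sB, of b] by (simp add: linear_lin r_def)
  have 2: "finite {b. r v b \<noteq> 0}" for v by (simp add: r_def finite_representation)
  have 3: "v = (\<Sum>b\<in>F. s (r v b) b)" if "finite F" "{b. r v b \<noteq> 0} \<subseteq> F" for v F
  proof -
    have "v = (\<Sum>b | r v b \<noteq> 0. s (r v b) b)"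
      using sum_nonzero_representation_eq[OF iB, of v] sB by (simp add: r_def)
    also have "\<dots> = (\<Sum>b\<in>F. s (r v b) b)"
      using that by (intro sum.mono_neutral_left) auto
    finally show ?thesis .
  qed
  show ?thesis using that 1 2 3 by blast
qed

lemma sep:
  assumes vs: "vector_space s" and h: "\<And>f. lin s (*) f \<Longrightarrow> f v = 0"
  shows "v = 0"
proof -
  obtain r where l: "\<And>b. lin s (*) (\<lambda>v. r v b)" and "\<And>v. finite {b. r v b \<noteq> 0}"
    and e: "\<And>v F. finite F \<Longrightarrow> {b. r v b \<noteq> 0} \<subseteq> F \<Longrightarrow> v = (\<Sum>b\<in>F. s (r v b) b)"
    by (rule basis_expand[OF vs]) blast
  have "{b. r v b \<noteq> 0} \<subseteq> {}" using h[OF l] by auto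
  from e[OF _ this] show ?thesis by simp
qed


lemma sum_list_neg: "sum_list (map (\<lambda>x. - f x) xs) = - sum_list (map f xs :: 'b::ab_group_add list)"
  by (induction xs) auto

lemma Z2:
  assumes vV: "vector_space sV" and vW: "vector_space sW" and vU: "vector_space sU"
    and b1: "\<And>x. lin sW sU (\<beta> x)" and b2: "\<And>y. lin sV sU (\<lambda>x. \<beta> x y)"
    and z: "\<And>f g. lin sV (*) f \<Longrightarrow> lin sW (*) g \<Longrightarrow> sum_list (map (\<lambda>(x,y). f x * g y) xs) = 0"
  shows "sum_list (map (\<lambda>(x,y). \<beta> x y) xs) = 0"
proof -
  obtain r where rl: "\<And>b. lin sV (*) (\<lambda>v. r v b)" and rf: "\<And>v. finite {b. r v b \<noteq> 0}"
    and re: "\<And>v F. finite F \<Longrightarrow> {b. r v b \<noteq> 0} \<subseteq> F \<Longrightarrow> v = (\<Sum>b\<in>F. sV (r v b) b)"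
    by (rule basis_expand[OF vV]) blast
  define F where "F = (\<Union>p\<in>set xs. {b. r (fst p) b \<noteq> 0})"
  have fF: "finite F" using rf by (auto simp: F_def)
  have "sum_list (map (\<lambda>(x,y). \<beta> x y) xs) = sum_list (map (\<lambda>p. \<Sum>b\<in>F. \<beta> b (sW (r (fst p) b) (snd p))) xs)"
  proof (rule arg_cong[where f=sum_list], rule map_cong[OF refl])
    fix p assume p: "p \<in> set xs"
    obtain x y where pxy: "p = (x,y)" by (cases p)
    have "x = (\<Sum>b\<in>F. sV (r x b) b)" using p pxy by (intro re fF) (force simp: F_def)
    then have "\<beta> x y = \<beta> (\<Sum>b\<in>F. sV (r x b) b) y" by simp
    also have "\<dots> = (\<Sum>b\<in>F. \<beta> (sV (r x b) b) y)" by (rule lin_sum[OF b2])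
    also have "\<dots> = (\<Sum>b\<in>F. \<beta> b (sW (r x b) y))"
      by (simp add: lin_scale[OF b2] lin_scale[OF b1])
    finally show "(case p of (x, y) \<Rightarrow> \<beta> x y) = (\<Sum>b\<in>F. \<beta> b (sW (r (fst p) b) (snd p)))"
      using pxy by simp
  qed
  also have "\<dots> = (\<Sum>b\<in>F. sum_list (map (\<lambda>p. \<beta> b (sW (r (fst p) b) (snd p))) xs))"
    by (rule sum_list_sum_swap)
  also have "\<dots> = (\<Sum>b\<in>F. \<beta> b (sum_list (map (\<lambda>p. sW (r (fst p) b) (snd p)) xs)))"
    by (simp add: lin_sum_list[OF b1])
  also have "\<dots> = 0"
  proof (rule sum.neutral, rule ballI)
    fix b
    have "sum_list (map (\<lambda>p. sW (r (fst p) b) (snd p)) xs) = 0"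
    proof (rule sep[OF vW])
      fix g assume g: "lin sW (*) g"
      have "g (sum_list (map (\<lambda>p. sW (r (fst p) b) (snd p)) xs)) = sum_list (map (\<lambda>(x,y). r x b * g y) xs)"
        by (simp add: lin_sum_list[OF g] lin_scale[OF g] split_def)
      also have "\<dots> = 0" by (rule z[OF rl g])
      finally show "g (sum_list (map (\<lambda>p. sW (r (fst p) b) (snd p)) xs)) = 0" .
    qed
    then show "\<beta> b (sum_list (map (\<lambda>p. sW (r (fst p) b) (snd p)) xs)) = 0"
      by (simp add: lin_zero[OF b1])
  qed
  finally show ?thesis .
qed

lemma T2:
  assumes vV: "vector_space sV" and vW: "vector_space sW" and vU: "vector_space sU"
    and b1: "\<And>x. lin sW sU (\<beta> x)" and b2: "\<And>y. lin sV sU (\<lambda>x. \<beta> x y)"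
    and te: "tensor2_eq sV sW xs ys"
  shows "sum_list (map (\<lambda>(x,y). \<beta> x y) xs) = sum_list (map (\<lambda>(x,y). \<beta> x y) ys)"
proof -
  let ?zs = "xs @ map (\<lambda>(x,y). (-x, y)) ys"
  have "sum_list (map (\<lambda>(x,y). \<beta> x y) ?zs) = 0"
  proof (rule Z2[OF vV vW vU b1 b2])
    fix f g assume f: "lin sV (*) f" and g: "lin sW (*) g"
    have "sum_list (map (\<lambda>(x,y). f x * g y) xs) = sum_list (map (\<lambda>(x,y). f x * g y) ys)"
      using te f g vV vW vs_times unfolding tensor2_eq_def linear_lin by blast
    then show "sum_list (map (\<lambda>(x,y). f x * g y) ?zs) = 0"
      by (simp add: o_def split_def lin_minus[OF f] sum_list_neg)
  qed
  then show ?thesis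
    by (simp add: o_def split_def lin_minus[OF b2] sum_list_neg)
qed


lemma Z3:
  assumes vU: "vector_space sU" and vV: "vector_space sV" and vW: "vector_space sW" and vX: "vector_space sX"
    and c1: "\<And>y z. lin sU sX (\<lambda>x. \<gamma> x y z)" and c2: "\<And>x z. lin sV sX (\<lambda>y. \<gamma> x y z)"
    and c3: "\<And>x y. lin sW sX (\<gamma> x y)"
    and z: "\<And>f g h. lin sU (*) f \<Longrightarrow> lin sV (*) g \<Longrightarrow> lin sW (*) h \<Longrightarrow>
              sum_list (map (\<lambda>(x,y,z). f x * g y * h z) xs) = 0"
  shows "sum_list (map (\<lambda>(x,y,z). \<gamma> x y z) xs) = 0"
proof -
  obtain r where rl: "\<And>b. lin sU (*) (\<lambda>v. r v b)" and rf: "\<And>v. finite {b. r v b \<noteq> 0}"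
    and re: "\<And>v F. finite F \<Longrightarrow> {b. r v b \<noteq> 0} \<subseteq> F \<Longrightarrow> v = (\<Sum>b\<in>F. sU (r v b) b)"
    by (rule basis_expand[OF vU]) blast
  define F where "F = (\<Union>p\<in>set xs. {b. r (fst p) b \<noteq> 0})"
  have fF: "finite F" using rf by (auto simp: F_def)
  have "sum_list (map (\<lambda>(x,y,z). \<gamma> x y z) xs)
     = sum_list (map (\<lambda>p. \<Sum>b\<in>F. \<gamma> b (sV (r (fst p) b) (fst (snd p))) (snd (snd p))) xs)"
  proof (rule arg_cong[where f=sum_list], rule map_cong[OF refl])
    fix p assume p: "p \<in> set xs"
    obtain x y z where pxy: "p = (x,y,z)" by (cases p) auto
    have "x = (\<Sum>b\<in>F. sU (r x b) b)" using p pxy by (intro re fF) (force simp: F_def)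
    then have "\<gamma> x y z = \<gamma> (\<Sum>b\<in>F. sU (r x b) b) y z" by simp
    also have "\<dots> = (\<Sum>b\<in>F. \<gamma> (sU (r x b) b) y z)" by (rule lin_sum[OF c1])
    also have "\<dots> = (\<Sum>b\<in>F. \<gamma> b (sV (r x b) y) z)"
      by (simp add: lin_scale[OF c1] lin_scale[OF c2])
    finally show "(case p of (x, y, z) \<Rightarrow> \<gamma> x y z) = (\<Sum>b\<in>F. \<gamma> b (sV (r (fst p) b) (fst (snd p))) (snd (snd p)))"
      using pxy by simp
  qed
  also have "\<dots> = (\<Sum>b\<in>F. sum_list (map (\<lambda>p. \<gamma> b (sV (r (fst p) b) (fst (snd p))) (snd (snd p))) xs))"
    by (rule sum_list_sum_swap)
  also have "\<dots> = 0"
  proof (rule sum.neutral, rule ballI)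
    fix b
    let ?ys = "map (\<lambda>p. (sV (r (fst p) b) (fst (snd p)), snd (snd p))) xs"
    have "sum_list (map (\<lambda>(y,z). \<gamma> b y z) ?ys) = 0"
    proof (rule Z2[OF vV vW vX c3 c2])
      fix g h assume g: "lin sV (*) g" and h: "lin sW (*) h"
      have "sum_list (map (\<lambda>(y,z). g y * h z) ?ys) = sum_list (map (\<lambda>(x,y,z). r x b * g y * h z) xs)"
        by (simp add: o_def split_def lin_scale[OF g])
      also have "\<dots> = 0" by (rule z[OF rl g h])
      finally show "sum_list (map (\<lambda>(y,z). g y * h z) ?ys) = 0" .
    qed
    then show "sum_list (map (\<lambda>p. \<gamma> b (sV (r (fst p) b) (fst (snd p))) (snd (snd p))) xs) = 0"
      by (simp add: o_def split_def)
  qed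
  finally show ?thesis .
qed

lemma T3:
  assumes vU: "vector_space sU" and vV: "vector_space sV" and vW: "vector_space sW" and vX: "vector_space sX"
    and c1: "\<And>y z. lin sU sX (\<lambda>x. \<gamma> x y z)" and c2: "\<And>x z. lin sV sX (\<lambda>y. \<gamma> x y z)"
    and c3: "\<And>x y. lin sW sX (\<gamma> x y)"
    and te: "tensor3_eq sU sV sW xs ys"
  shows "sum_list (map (\<lambda>(x,y,z). \<gamma> x y z) xs) = sum_list (map (\<lambda>(x,y,z). \<gamma> x y z) ys)"
proof -
  let ?zs = "xs @ map (\<lambda>(x,y,z). (-x, y, z)) ys"
  have "sum_list (map (\<lambda>(x,y,z). \<gamma> x y z) ?zs) = 0"
  proof (rule Z3[OF vU vV vW vX c1 c2 c3])
    fix f g h assume f: "lin sU (*) f" and g: "lin sV (*) g" and h: "lin sW (*) h"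
    have "sum_list (map (\<lambda>(x,y,z). f x * g y * h z) xs) = sum_list (map (\<lambda>(x,y,z). f x * g y * h z) ys)"
      using te f g h vU vV vW vs_times unfolding tensor3_eq_def linear_lin by blast
    then show "sum_list (map (\<lambda>(x,y,z). f x * g y * h z) ?zs) = 0"
      by (simp add: o_def split_def lin_minus[OF f] sum_list_neg)
  qed
  then show ?thesis
    by (simp add: o_def split_def lin_minus[OF c1] sum_list_neg)
qed

lemma Lin2:
  assumes vX: "vector_space sX" and vV: "vector_space sV" and vW: "vector_space sW" and vU: "vector_space sU"
    and b1: "\<And>x. lin sW sU (\<beta> x)" and b2: "\<And>y. lin sV sU (\<lambda>x. \<beta> x y)"
    and D: "tensor2_linear sX sV sW D"
  shows "lin sX sU (\<lambda>a. sum_list (map (\<lambda>(x,y). \<beta> x y) (D a)))"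
proof -
  have Dl: "lin sX (*) (\<lambda>a. sum_list (map (\<lambda>(u, v). f u * g v) (D a)))"
    if "lin sV (*) f" "lin sW (*) g" for f g
    using D that vV vW vs_times unfolding tensor2_linear_def linear_lin by blast
  have add: "tensor2_eq sV sW (D (a+b)) (D a @ D b)" for a b
    unfolding tensor2_eq_def linear_lin using lin_add[OF Dl] by auto
  have scl: "tensor2_eq sV sW (D (sX c a)) (map (\<lambda>(x,y). (sV c x, y)) (D a))" for c a
    unfolding tensor2_eq_def linear_lin using lin_scale[OF Dl]
    by (auto simp: o_def split_def lin_scale sum_list_const_mult mult.assoc)
  show ?thesis unfolding lin_def
  proof (intro conjI allI)
    fix a b
    show "sum_list (map (\<lambda>(x,y). \<beta> x y) (D (a+b))) = sum_list (map (\<lambda>(x,y). \<beta> x y) (D a)) + sum_list (map (\<lambda>(x,y). \<beta> x y) (D b))"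
      using T2[OF vV vW vU b1 b2 add[of a b]] by simp
  next
    fix c a
    show "sum_list (map (\<lambda>(x,y). \<beta> x y) (D (sX c a))) = sU c (sum_list (map (\<lambda>(x,y). \<beta> x y) (D a)))"
      using T2[OF vV vW vU b1 b2 scl[of c a]]
      by (simp add: o_def split_def lin_scale[OF b2] scale_sum_list[OF vU])
  qed
qed


theorem lemma4:
  fixes sH :: "'a::field \<Rightarrow> 'h::ab_group_add \<Rightarrow> 'h"
    and sK :: "'a \<Rightarrow> 'k::ab_group_add \<Rightarrow> 'k"
    and mH :: "'h \<Rightarrow> 'h \<Rightarrow> 'h" and uH :: 'h and \<Delta>H :: "'h \<Rightarrow> ('h \<times> 'h) list"
    and \<epsilon>H :: "'h \<Rightarrow> 'a" and SH :: "'h \<Rightarrow> 'h"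
    and act :: "'h \<Rightarrow> 'k \<Rightarrow> 'k" and \<rho> :: "'k \<Rightarrow> ('h \<times> 'k) list"
    and mK :: "'k \<Rightarrow> 'k \<Rightarrow> 'k" and uK :: 'k and \<Delta>K :: "'k \<Rightarrow> ('k \<times> 'k) list"
    and \<epsilon>K :: "'k \<Rightarrow> 'a" and R :: "'k \<Rightarrow> 'h"
  assumes "is_YD_rel_RB sH mH uH \<Delta>H \<epsilon>H SH sK act \<rho> mK uK \<Delta>K \<epsilon>K R"
  shows "(\<forall>a. sum_list (map (\<lambda>(x, y). mK (SK_of SH act \<Delta>K R x) y) (\<Delta>K a)) = sK (\<epsilon>K a) uK
            \<and> sum_list (map (\<lambda>(x, y). mK x (SK_of SH act \<Delta>K R y)) (\<Delta>K a)) = sK (\<epsilon>K a) uK)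
         \<and> is_YD_hopf_monoid sH mH uH \<Delta>H \<epsilon>H SH sK act \<rho> mK uK \<Delta>K \<epsilon>K (SK_of SH act \<Delta>K R)"
proof -
  have hopf: "is_hopf_algebra sH mH uH \<Delta>H \<epsilon>H SH"
    and bim: "is_YD_bimonoid sH mH uH \<Delta>H \<epsilon>H SH sK act \<rho> mK uK \<Delta>K \<epsilon>K"
    and Rlin: "Vector_Spaces.linear sK sH R"
    and RD: "\<And>a. tensor2_eq sH sH (\<Delta>H (R a)) (map (\<lambda>(x, y). (R x, R y)) (\<Delta>K a))"
    and R\<epsilon>: "\<And>a. \<epsilon>H (R a) = \<epsilon>K a"
    and RB1: "\<And>a b. mH (R a) (R b) = R (sum_list (map (\<lambda>(a1, a2). mK a1 (act (R a2) b)) (\<Delta>K a)))"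
    and bij: "bij R"
    and RB3: "\<And>a. sum_list (map (\<lambda>(a1, a2, a3). mK (act a1 (inv R (SH a2))) (inv R a3))
              (sweedler3 \<Delta>H a)) = sK (\<epsilon>H a) uK"
    using assms unfolding is_YD_rel_RB_def by blast+
  have algH: "is_algebra sH mH uH" and coalgH: "is_coalgebra sH \<Delta>H \<epsilon>H"
    and \<epsilon>Hm: "\<And>x y. \<epsilon>H (mH x y) = \<epsilon>H x * \<epsilon>H y"
    and SHlin: "Vector_Spaces.linear sH sH SH"
    and Hant: "\<And>a. sum_list (map (\<lambda>(x, y). mH (SH x) y) (\<Delta>H a)) = sH (\<epsilon>H a) uH"
    and Hant2: "\<And>a. sum_list (map (\<lambda>(x, y). mH x (SH y)) (\<Delta>H a)) = sH (\<epsilon>H a) uH"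
    using hopf unfolding is_hopf_algebra_def by blast+
  have ydm: "is_YD_module sH mH uH \<Delta>H \<epsilon>H SH sK act \<rho>"
    and algK: "is_algebra sK mK uK" and coalgK: "is_coalgebra sK \<Delta>K \<epsilon>K"
    and actu: "\<And>h. act h uK = sK (\<epsilon>H h) uK"
    and \<Delta>Ku: "tensor2_eq sK sK (\<Delta>K uK) [(uK, uK)]"
    and \<epsilon>Ku: "\<epsilon>K uK = 1"
    using bim unfolding is_YD_bimonoid_def by blast+
  have vH: "vector_space sH" and mH1: "\<And>x. lin sH sH (mH x)" and mH2: "\<And>y. lin sH sH (\<lambda>x. mH x y)"
    and mHa: "\<And>x y z. mH (mH x y) z = mH x (mH y z)" and mHu: "\<And>x. mH uH x = x" "\<And>x. mH x uH = x"
    using algH unfolding is_algebra_def linear_lin by blast+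
  have vK: "vector_space sK" and mK1: "\<And>x. lin sK sK (mK x)" and mK2: "\<And>y. lin sK sK (\<lambda>x. mK x y)"
    and mKu: "\<And>x. mK uK x = x" "\<And>x. mK x uK = x"
    using algK unfolding is_algebra_def linear_lin by blast+
  have DH: "tensor2_linear sH sH sH \<Delta>H"
    using coalgH unfolding is_coalgebra_def by blast
  have DK: "tensor2_linear sK sK sK \<Delta>K" and coassK: "\<And>c. tensor3_eq sK sK sK (sweedler3' \<Delta>K c) (sweedler3 \<Delta>K c)"
    and counitK: "\<And>c. sum_list (map (\<lambda>(x, y). sK (\<epsilon>K y) x) (\<Delta>K c)) = c"
    using coalgK unfolding is_coalgebra_def by blast+
  have act1: "\<And>h. lin sK sK (act h)" and act2: "\<And>v. lin sH sK (\<lambda>h. act h v)"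
    using ydm unfolding is_YD_module_def linear_lin by blast+
  have SHl: "lin sH sH SH" and Rl: "lin sK sH R" using SHlin Rlin by (simp_all add: linear_lin)
  have RRi: "\<And>h. R (inv R h) = h" using bij by (simp add: bij_is_surj surj_f_inv_f)
  have RiR: "\<And>k. inv R (R k) = k" using bij by (simp add: bij_is_inj)
  have Ril: "lin sH sK (inv R)"
    unfolding lin_def
  proof (intro conjI allI)
    fix x y show "inv R (x + y) = inv R x + inv R y"
      by (metis RiR RRi lin_add[OF Rl])
  next
    fix c x show "inv R (sH c x) = sK c (inv R x)"
      by (metis RiR RRi lin_scale[OF Rl])
  qed
  have e2: "mH (R uK) (R uK) = R uK"
  proof -
    have "mH (R uK) (R uK) = R (sum_list (map (\<lambda>(a1, a2). mK a1 (act (R a2) uK)) (\<Delta>K uK)))" by (rule RB1)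
    also have "sum_list (map (\<lambda>(a1, a2). mK a1 (act (R a2) uK)) (\<Delta>K uK)) = sum_list (map (\<lambda>(x, y). sK (\<epsilon>K y) x) (\<Delta>K uK))"
      by (simp add: actu R\<epsilon> lin_scale[OF mK1] mKu split_def)
    also have "\<dots> = uK" by (rule counitK)
    finally show ?thesis .
  qed
  have vT: "vector_space ((*) :: 'a \<Rightarrow> 'a \<Rightarrow> 'a)" by (rule vs_times)
  have b_SH1: "\<And>x. lin sH sH (\<lambda>y. mH (SH x) y)" using mH1 by simp
  have b_SH2: "\<And>y. lin sH sH (\<lambda>x. mH (SH x) y)" using lin_comp[OF SHl mH2] by simp
  have b_SHR1: "\<And>x. lin sK sH (\<lambda>y. mH (SH (R x)) (R y))" using lin_comp[OF Rl mH1] by simp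
  have b_SHR2: "\<And>y. lin sK sH (\<lambda>x. mH (SH (R x)) (R y))" using lin_comp[OF Rl lin_comp[OF SHl mH2]] by simp
  have eS: "mH (SH (R uK)) (R uK) = uH"
  proof -
    have "uH = sH (\<epsilon>H (R uK)) uH" by (simp add: R\<epsilon> \<epsilon>Ku vs_one[OF vH])
    also have "\<dots> = sum_list (map (\<lambda>(x, y). mH (SH x) y) (\<Delta>H (R uK)))" by (rule Hant[symmetric])
    also have "\<dots> = sum_list (map (\<lambda>(x, y). mH (SH x) y) (map (\<lambda>(x, y). (R x, R y)) (\<Delta>K uK)))"
      by (rule T2[OF vH vH vH b_SH1 b_SH2 RD])
    also have "\<dots> = sum_list (map (\<lambda>(x, y). mH (SH (R x)) (R y)) (\<Delta>K uK))"
      by (simp add: o_def split_def)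
    also have "\<dots> = sum_list (map (\<lambda>(x, y). mH (SH (R x)) (R y)) [(uK,uK)])"
      by (rule T2[OF vK vK vH b_SHR1 b_SHR2 \<Delta>Ku])
    finally show ?thesis by simp
  qed
  have Ru: "R uK = uH"
    by (metis e2 eS mHa mHu)
  have SKdef: "\<And>x. SK_of SH act \<Delta>K R x = sum_list (map (\<lambda>(p, q). act (R p) (inv R (SH (R q)))) (\<Delta>K x))"
    by (simp add: SK_of_def)
  have g1: "\<And>y z. lin sK sK (\<lambda>x. mK (act (R x) (inv R (SH (R y)))) z)"
    using lin_comp[OF lin_comp[OF Rl act2] mK2] by simp
  have g2: "\<And>x z. lin sK sK (\<lambda>y. mK (act (R x) (inv R (SH (R y)))) z)"
    using lin_comp[OF lin_comp[OF lin_comp[OF lin_comp[OF Rl SHl] Ril] act1] mK2] by simp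
  have g3: "\<And>x y. lin sK sK (mK (act (R x) (inv R (SH (R y)))))" using mK1 by simp
  have d1: "\<And>u v. lin sH sK (\<lambda>h. mK (act h (inv R (SH u))) (inv R v))"
    using lin_comp[OF act2 mK2] by simp
  have d2: "\<And>h v. lin sH sK (\<lambda>u. mK (act h (inv R (SH u))) (inv R v))"
    using lin_comp[OF lin_comp[OF lin_comp[OF SHl Ril] act1] mK2] by simp
  have d3: "\<And>h u. lin sH sK (\<lambda>v. mK (act h (inv R (SH u))) (inv R v))"
    using lin_comp[OF Ril mK1] by simp
  have left: "\<And>a. sum_list (map (\<lambda>(x, y). mK (SK_of SH act \<Delta>K R x) y) (\<Delta>K a)) = sK (\<epsilon>K a) uK"
  proof -
    fix a
    have "sum_list (map (\<lambda>(x, y). mK (SK_of SH act \<Delta>K R x) y) (\<Delta>K a))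
        = sum_list (map (\<lambda>(x,y,z). mK (act (R x) (inv R (SH (R y)))) z) (sweedler3' \<Delta>K a))"
      by (simp add: SKdef sweedler3'_def sum_list_concat_map lin_sum_list[OF mK2] split_def o_def)
    also have "\<dots> = sum_list (map (\<lambda>(x,y,z). mK (act (R x) (inv R (SH (R y)))) z) (sweedler3 \<Delta>K a))"
      by (rule T3[OF vK vK vK vK g1 g2 g3 coassK])
    also have "\<dots> = sum_list (map (\<lambda>(x,w). sum_list (map (\<lambda>(y,z). mK (act (R x) (inv R (SH (R y)))) z) (\<Delta>K w))) (\<Delta>K a))"
      by (simp add: sweedler3_def sum_list_concat_map split_def o_def)
    also have "\<dots> = sum_list (map (\<lambda>(x,w). sum_list (map (\<lambda>(u,v). mK (act (R x) (inv R (SH u))) (inv R v)) (\<Delta>H (R w)))) (\<Delta>K a))"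
    proof (rule arg_cong[where f=sum_list], rule map_cong[OF refl], clarify)
      fix x w
      have "sum_list (map (\<lambda>(u,v). mK (act (R x) (inv R (SH u))) (inv R v)) (\<Delta>H (R w)))
          = sum_list (map (\<lambda>(u,v). mK (act (R x) (inv R (SH u))) (inv R v)) (map (\<lambda>(x, y). (R x, R y)) (\<Delta>K w)))"
        by (rule T2[OF vH vH vK d3 d2 RD])
      then show "sum_list (map (\<lambda>(y,z). mK (act (R x) (inv R (SH (R y)))) z) (\<Delta>K w))
          = sum_list (map (\<lambda>(u,v). mK (act (R x) (inv R (SH u))) (inv R v)) (\<Delta>H (R w)))"
        by (simp add: o_def split_def RiR)
    qed
    also have "\<dots> = sum_list (map (\<lambda>(h1,h2). sum_list (map (\<lambda>(u,v). mK (act h1 (inv R (SH u))) (inv R v)) (\<Delta>H h2))) (\<Delta>H (R a)))"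
    proof -
      have p1: "\<And>h2. lin sH sK (\<lambda>h1. sum_list (map (\<lambda>(u,v). mK (act h1 (inv R (SH u))) (inv R v)) (\<Delta>H h2)))"
      proof -
        fix h2
        have "lin sH sK (\<lambda>h1. sum_list (map (\<lambda>t. (\<lambda>h1. case t of (u,v) \<Rightarrow> mK (act h1 (inv R (SH u))) (inv R v)) h1) (\<Delta>H h2)))"
          by (rule lin_sum_list_fun[OF vK]) (auto simp: split_def d1)
        then show "?thesis h2" by (simp add: split_def)
      qed
      have p2: "\<And>h1. lin sH sK (\<lambda>h2. sum_list (map (\<lambda>(u,v). mK (act h1 (inv R (SH u))) (inv R v)) (\<Delta>H h2)))"
        by (rule Lin2[OF vH vH vH vK d3 d2 DH])
      show ?thesis
        using T2[OF vH vH vK p2 p1 RD, symmetric] by (simp add: o_def split_def)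
    qed
    also have "\<dots> = sum_list (map (\<lambda>(a1, a2, a3). mK (act a1 (inv R (SH a2))) (inv R a3)) (sweedler3 \<Delta>H (R a)))"
      by (simp add: sweedler3_def sum_list_concat_map split_def o_def)
    also have "\<dots> = sK (\<epsilon>K a) uK" by (simp add: RB3 R\<epsilon>)
    finally show "?thesis a" .
  qed
  have r1: "\<And>y z. lin sK sK (\<lambda>x. mK x (act (R y) (inv R (SH (R z)))))" using mK2 by simp
  have r2: "\<And>x z. lin sK sK (\<lambda>y. mK x (act (R y) (inv R (SH (R z)))))"
    using lin_comp[OF lin_comp[OF Rl act2] mK1] by simp
  have r3: "\<And>x y. lin sK sK (\<lambda>z. mK x (act (R y) (inv R (SH (R z)))))"
    using lin_comp[OF lin_comp[OF lin_comp[OF lin_comp[OF Rl SHl] Ril] act1] mK1] by simp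
  have h1: "\<And>x. lin sH sH (\<lambda>y. mH x (SH y))" using lin_comp[OF SHl mH1] by simp
  have h2: "\<And>y. lin sH sH (\<lambda>x. mH x (SH y))" using mH2 by simp
  have right: "\<And>a. sum_list (map (\<lambda>(x, y). mK x (SK_of SH act \<Delta>K R y)) (\<Delta>K a)) = sK (\<epsilon>K a) uK"
  proof -
    fix a
    have "sum_list (map (\<lambda>(x, y). mK x (SK_of SH act \<Delta>K R y)) (\<Delta>K a))
        = sum_list (map (\<lambda>(x,y,z). mK x (act (R y) (inv R (SH (R z))))) (sweedler3 \<Delta>K a))"
      by (simp add: SKdef sweedler3_def sum_list_concat_map lin_sum_list[OF mK1] split_def o_def)
    also have "\<dots> = sum_list (map (\<lambda>(x,y,z). mK x (act (R y) (inv R (SH (R z))))) (sweedler3' \<Delta>K a))"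
      by (rule T3[OF vK vK vK vK r1 r2 r3 coassK, symmetric])
    also have "\<dots> = sum_list (map (\<lambda>(z,q). sum_list (map (\<lambda>(x,p). mK x (act (R p) (inv R (SH (R q))))) (\<Delta>K z))) (\<Delta>K a))"
      by (simp add: sweedler3'_def sum_list_concat_map split_def o_def)
    finally have eq1: "sum_list (map (\<lambda>(x, y). mK x (SK_of SH act \<Delta>K R y)) (\<Delta>K a))
       = sum_list (map (\<lambda>(z,q). sum_list (map (\<lambda>(x,p). mK x (act (R p) (inv R (SH (R q))))) (\<Delta>K z))) (\<Delta>K a))" .
    have "R (sum_list (map (\<lambda>(x, y). mK x (SK_of SH act \<Delta>K R y)) (\<Delta>K a)))
        = sum_list (map (\<lambda>(z,q). R (sum_list (map (\<lambda>(x,p). mK x (act (R p) (inv R (SH (R q))))) (\<Delta>K z)))) (\<Delta>K a))"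
      unfolding eq1 by (simp add: lin_sum_list[OF Rl] split_def)
    also have "\<dots> = sum_list (map (\<lambda>(z,q). mH (R z) (SH (R q))) (\<Delta>K a))"
      by (rule arg_cong[where f=sum_list], rule map_cong[OF refl], clarify, simp only: RB1[symmetric] RRi)
    also have "\<dots> = sum_list (map (\<lambda>(x,y). mH x (SH y)) (map (\<lambda>(x, y). (R x, R y)) (\<Delta>K a)))"
      by (simp add: o_def split_def)
    also have "\<dots> = sum_list (map (\<lambda>(x,y). mH x (SH y)) (\<Delta>H (R a)))"
      by (rule T2[OF vH vH vH h1 h2 RD, symmetric])
    also have "\<dots> = sH (\<epsilon>K a) uH" by (simp add: Hant2 R\<epsilon>)
    also have "\<dots> = R (sK (\<epsilon>K a) uK)" by (simp add: lin_scale[OF Rl] Ru)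
    finally show "?thesis a" using bij by (simp add: bij_is_inj inj_eq)
  qed
  have SKlin: "Vector_Spaces.linear sK sK (SK_of SH act \<Delta>K R)"
  proof -
    have "lin sK sK (\<lambda>a. sum_list (map (\<lambda>(p, q). act (R p) (inv R (SH (R q)))) (\<Delta>K a)))"
    proof (rule Lin2[OF vK vK vK vK _ _ DK])
      show "\<And>x. lin sK sK (\<lambda>q. act (R x) (inv R (SH (R q))))"
        using lin_comp[OF lin_comp[OF lin_comp[OF Rl SHl] Ril] act1] by simp
      show "\<And>y. lin sK sK (\<lambda>p. act (R p) (inv R (SH (R y))))"
        using lin_comp[OF Rl act2] by simp
    qed
    then show ?thesis using vK by (simp add: linear_lin SKdef[abs_def])
  qed
  show ?thesis
    unfolding is_YD_hopf_monoid_def using bim SKlin left right by blast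
qed

end
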